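(* Let $v_1,\dots,v_{d+1}$ be the vertices of a $d$-simplex in $\mathbb R^d$ in general position. Then $$\sum_{\sigma\in\mathfrak S_d}\operatorname{sign}(\sigma)\,g_d(z(\sigma,1),z(\sigma,2),\dots,z(\sigma,d))=\frac{1}{d!}\det X(\mathbf 1,d),$$ where $\mathbf 1$ is the identity permutation.
   Context: Write $v_i=(x_{i,1},\dots,x_{i,d})$. $\pi^{(j)}$ forgets the last $j$ coordinates; the simplex is in general position if for every $0\le k\le d-1$ and every $(k+1)$-subset $U$ of its vertices, $\pi^{(d-k)}(\mathrm{conv}(U))$ is a $k$-simplex. For $\sigma\in\mathfrak S_d$, $1\le k\le d$: $X(\sigma,k)$ is the $(k+1)\times(k+1)$ matrix with rows $(1,x_{\sigma(r),1},\dots,x_{\sigma(r),k})$, $r=1,\dots,k$, and last row $(1,x_{d+1,1},\dots,x_{d+1,k})$; $Y(\sigma,k)$ is the $k\times k$ matrix with rows $(1,x_{\sigma(r),1},\dots,x_{\sigma(r),k-1})$, $r=1,\dots,k$; $z(\sigma,k)=\det X(\sigma,k)/\det Y(\sigma,k)$ (nonzero by general position). Let $B_k(x)$ be the Bernoulli polynomials and $P_k(x)=(B_{k+1}(x+1)-B_{k+1})/(k+1)$. Extended sum: for $h(s)=\sum_{k\ge0}h_ks^k$ with coefficients in a polynomial ring over $\mathbb R$ and upper limit $u$, $\sum_{s=1}^uh:=h_0u+\sum_{k\ge1}h_kP_k(u)$. $f_d(a_1,\dots,a_d)=\sum_{s_1=1}^{a_1}\sum_{s_2=1}^{a_2s_1}\cdots\sum_{s_d=1}^{a_ds_{d-1}}1$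 (extended sums, innermost first; a polynomial in the $a_i$), and $g_d(b_1,\dots,b_d)=f_d(b_1,b_2/b_1,\dots,b_d/b_{d-1})$ for nonzero reals $b_i$. *)

theory Defs
  imports "Jordan_Normal_Form.Determinant" "HOL-Computational_Algebra.Polynomial"
    "HOL-Combinatorics.Permutations"
begin

(* Bernoulli numbers, convention B_0 = 1, sum_{k=0}^{m} (m+1 choose k) B_k = 0 for m >= 1
   (so B_1 = -1/2). Only B_n for n >= 2 matter below. *)
function bernoulli_num :: "nat \<Rightarrow> real" where
  "bernoulli_num n =
     (if n = 0 then 1
      else - (1 / real (n + 1)) * (\<Sum>k<n. real ((n + 1) choose k) * bernoulli_num k))"
  by auto
termination by (relation "measure id") auto

definition bernoulli_poly :: "nat \<Rightarrow> real poly" where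
  "bernoulli_poly n = (\<Sum>k\<le>n. monom (real (n choose k) * bernoulli_num k) (n - k))"

definition P_poly :: "nat \<Rightarrow> real poly" where
  "P_poly k = smult (1 / real (k + 1))
      (pcompose (bernoulli_poly (Suc k)) [:1, 1:] - [:bernoulli_num (Suc k):])"

(* Extended sum  sum_{s=1}^{u} h := h_0 u + sum_{k>=1} h_k P_k(u),
   for h a polynomial in s and an upper limit u given as a polynomial in another variable;
   the result is a polynomial in that variable. *)
definition ext_sum :: "real poly \<Rightarrow> real poly \<Rightarrow> real poly" where
  "ext_sum h u = smult (coeff h 0) u + (\<Sum>k\<in>{1..degree h}. smult (coeff h k) (pcompose (P_poly k) u))"

(* f_iter a d m: the m innermost extended sums of f_d,
   sum_{s_{d-m+1}=1}^{a_{d-m+1} s_{d-m}} ... sum_{s_d=1}^{a_d s_{d-1}} 1,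
   as a polynomial in the variable s_{d-m}. *)
fun f_iter :: "(nat \<Rightarrow> real) \<Rightarrow> nat \<Rightarrow> nat \<Rightarrow> real poly" where
  "f_iter a d 0 = 1"
| "f_iter a d (Suc m) = ext_sum (f_iter a d m) [:0, a (d - m):]"

(* f_d(a_1,...,a_d), evaluated at reals a_1..a_d (a indexed from 1); the outermost
   upper limit a_1 equals a_1 * s_0 with s_0 = 1. *)
definition f_fun :: "nat \<Rightarrow> (nat \<Rightarrow> real) \<Rightarrow> real" where
  "f_fun d a = poly (f_iter a d d) 1"

definition g_fun :: "nat \<Rightarrow> (nat \<Rightarrow> real) \<Rightarrow> real" where
  "g_fun d b = f_fun d (\<lambda>i. if i = 1 then b 1 else b i / b (i - 1))"

(* points p_i (i in I), restricted to their first k coordinates (indexed 1..k),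
   form an affinely independent family in R^k *)
definition aff_indep_fam :: "nat \<Rightarrow> nat set \<Rightarrow> (nat \<Rightarrow> nat \<Rightarrow> real) \<Rightarrow> bool" where
  "aff_indep_fam k I p \<longleftrightarrow>
     (\<forall>c :: nat \<Rightarrow> real. (\<Sum>i\<in>I. c i) = 0 \<and> (\<forall>j\<in>{1..k}. (\<Sum>i\<in>I. c i * p i j) = 0)
        \<longrightarrow> (\<forall>i\<in>I. c i = 0))"

(* general position of the simplex with vertices x 1, ..., x (d+1) in R^d:
   for 0 <= k <= d-1 and every (k+1)-subset U of the vertices, the projection to the first
   k coordinates of conv U is a k-simplex, i.e. the projected vertices are affinely independent *)
definition general_position :: "nat \<Rightarrow> (nat \<Rightarrow> nat \<Rightarrow> real) \<Rightarrow> bool" where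
  "general_position d x \<longleftrightarrow>
     (\<forall>k<d. \<forall>U. U \<subseteq> {1..d+1} \<and> card U = k + 1 \<longrightarrow> aff_indep_fam k U x)"

(* X(sigma,k): (k+1)x(k+1), rows (1, x_{sigma(r),1..k}) for r = 1..k, last row (1, x_{d+1,1..k});
   0-based matrix indices *)
definition X_mat :: "nat \<Rightarrow> (nat \<Rightarrow> nat \<Rightarrow> real) \<Rightarrow> (nat \<Rightarrow> nat) \<Rightarrow> nat \<Rightarrow> real mat" where
  "X_mat d x \<sigma> k = mat (k + 1) (k + 1)
     (\<lambda>(r, c). if c = 0 then 1 else if r < k then x (\<sigma> (r + 1)) c else x (d + 1) c)"

definition Y_mat :: "(nat \<Rightarrow> nat \<Rightarrow> real) \<Rightarrow> (nat \<Rightarrow> nat) \<Rightarrow> nat \<Rightarrow> real mat" where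
  "Y_mat x \<sigma> k = mat k k (\<lambda>(r, c). if c = 0 then 1 else x (\<sigma> (r + 1)) c)"

definition z_val :: "nat \<Rightarrow> (nat \<Rightarrow> nat \<Rightarrow> real) \<Rightarrow> (nat \<Rightarrow> nat) \<Rightarrow> nat \<Rightarrow> real" where
  "z_val d x \<sigma> k = det (X_mat d x \<sigma> k) / det (Y_mat x \<sigma> k)"

end

theory Submission
  imports Defs
begin

lemma bern_rec:
  assumes "n \<ge> 2"
  shows "(\<Sum>k<n. real (n choose k) * bernoulli_num k) = 0"
proof -
  obtain m where n: "n = Suc m" and m: "m \<ge> 1" using assms by (cases n) auto
  have B: "bernoulli_num m = - (1 / real (m + 1)) * (\<Sum>k<m. real ((m + 1) choose k) * bernoulli_num k)"
    using m by (subst bernoulli_num.simps) simp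
  have "(\<Sum>k<n. real (n choose k) * bernoulli_num k)
      = (\<Sum>k<m. real ((m+1) choose k) * bernoulli_num k) + real (m+1) * bernoulli_num m"
    by (simp add: n)
  also have "\<dots> = 0" unfolding B by (simp add: field_simps)
  finally show ?thesis .
qed

lemma coeff_bernoulli_poly:
  "coeff (bernoulli_poly n) j = (if j \<le> n then real (n choose (n-j)) * bernoulli_num (n-j) else 0)"
proof -
  have "coeff (bernoulli_poly n) j = (\<Sum>k\<le>n. if n - k = j then real (n choose k) * bernoulli_num k else 0)"
    unfolding bernoulli_poly_def coeff_sum coeff_monom by (intro sum.cong) auto
  also have "\<dots> = (\<Sum>k\<le>n. if k = n - j \<and> j \<le> n then real (n choose k) * bernoulli_num k else 0)"
    by (intro sum.cong) auto
  also have "\<dots> = (if j \<le> n then real (n choose (n-j)) * bernoulli_num (n-j) else 0)"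
    by (cases "j \<le> n") (simp_all add: sum.delta)
  finally show ?thesis .
qed

lemma degree_bernoulli_poly: "degree (bernoulli_poly n) = n"
  and lead_bernoulli_poly: "coeff (bernoulli_poly n) n = 1"
proof -
  show c: "coeff (bernoulli_poly n) n = 1"
    by (simp add: coeff_bernoulli_poly)
  have "degree (bernoulli_poly n) \<le> n"
    by (rule degree_le) (simp add: coeff_bernoulli_poly)
  moreover have "n \<le> degree (bernoulli_poly n)"
    by (rule le_degree) (simp add: c)
  ultimately show "degree (bernoulli_poly n) = n" by simp
qed

lemma poly_bernoulli_poly_1:
  assumes "n \<ge> 2" shows "poly (bernoulli_poly n) 1 = bernoulli_num n"
proof -
  have "poly (bernoulli_poly n) 1 = (\<Sum>k\<le>n. real (n choose k) * bernoulli_num k)"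
    unfolding bernoulli_poly_def poly_sum poly_monom by simp
  also have "\<dots> = (\<Sum>k<n. real (n choose k) * bernoulli_num k) + bernoulli_num n"
    by (simp add: lessThan_Suc_atMost[symmetric])
  also have "\<dots> = bernoulli_num n" using bern_rec[OF assms] by simp
  finally show ?thesis .
qed

lemma P_poly_coeff0: assumes "k \<ge> 1" shows "coeff (P_poly k) 0 = 0"
proof -
  have "coeff (P_poly k) 0 = poly (P_poly k) 0" by (simp add: poly_0_coeff_0)
  also have "\<dots> = 0"
    unfolding P_poly_def using poly_bernoulli_poly_1[of "Suc k"] assms
    by (simp add: poly_pcompose)
  finally show ?thesis .
qed

lemma degree_pc_bern: "degree (pcompose (bernoulli_poly n) [:1, 1:]) = n"
  by (simp add: degree_pcompose degree_bernoulli_poly)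

lemma lead_pc_bern: "coeff (pcompose (bernoulli_poly n) [:1, 1:]) n = 1"
proof -
  have "lead_coeff (pcompose (bernoulli_poly n) [:1, 1:]) = lead_coeff (bernoulli_poly n) * lead_coeff [:1,1::real:] ^ degree (bernoulli_poly n)"
    by (rule lead_coeff_comp) simp
  then show ?thesis by (simp add: degree_pc_bern degree_bernoulli_poly lead_bernoulli_poly)
qed

lemma P_poly_lead: "coeff (P_poly k) (Suc k) = 1 / real (Suc k)"
  unfolding P_poly_def using lead_pc_bern[of "Suc k"] by simp

lemma P_poly_degree: "degree (P_poly k) \<le> Suc k"
proof -
  have "degree (pcompose (bernoulli_poly (Suc k)) [:1, 1:] - [:bernoulli_num (Suc k):]) \<le> Suc k"
    by (rule degree_le) (auto simp: coeff_eq_0 degree_pc_bern)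
  then show ?thesis unfolding P_poly_def by (meson degree_smult_le order_trans)
qed

lemma poly_as_sum: fixes p :: "real poly" assumes "degree p \<le> D" shows "poly p x = (\<Sum>j\<le>D. coeff p j * x ^ j)"
proof -
  have "poly p x = (\<Sum>j\<le>degree p. coeff p j * x ^ j)" by (rule poly_altdef)
  also have "\<dots> = (\<Sum>j\<le>D. coeff p j * x ^ j)"
    by (rule sum.mono_neutral_left) (use assms in \<open>auto simp: coeff_eq_0\<close>)
  finally show ?thesis .
qed

lemma poly_P_poly: assumes "k \<ge> 1"
  shows "poly (P_poly k) u = (\<Sum>j\<in>{1..Suc k}. coeff (P_poly k) j * u ^ j)"
proof -
  have "poly (P_poly k) u = (\<Sum>j\<le>Suc k. coeff (P_poly k) j * u ^ j)"
    by (rule poly_as_sum[OF P_poly_degree])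
  also have "\<dots> = (\<Sum>j\<in>insert 0 {1..Suc k}. coeff (P_poly k) j * u ^ j)"
    by (rule sum.cong) auto
  also have "\<dots> = (\<Sum>j\<in>{1..Suc k}. coeff (P_poly k) j * u ^ j)"
    by (simp add: P_poly_coeff0[OF assms])
  finally show ?thesis .
qed

lemma ext_sum_bound: assumes "degree h \<le> N"
  shows "ext_sum h u = smult (coeff h 0) u + (\<Sum>k\<in>{1..N}. smult (coeff h k) (pcompose (P_poly k) u))"
  unfolding ext_sum_def
  by (rule arg_cong[where f="\<lambda>t. _ + t"], rule sum.mono_neutral_left) (use assms in \<open>auto simp: coeff_eq_0\<close>)

lemma smult_sum_right: "smult c (\<Sum>i\<in>S. f i) = (\<Sum>i\<in>S. smult c (f i))"
  by (induct S rule: infinite_finite_induct) (auto simp: smult_add_right)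

lemma ext_sum_lin:
  assumes "finite A" "\<And>a. a \<in> A \<Longrightarrow> degree (h a) \<le> N"
  shows "ext_sum (\<Sum>a\<in>A. smult (c a) (h a)) u = (\<Sum>a\<in>A. smult (c a) (ext_sum (h a) u))"
proof -
  have dg: "degree (\<Sum>a\<in>A. smult (c a) (h a)) \<le> N"
    by (rule degree_sum_le) (use assms in \<open>auto intro: order_trans[OF degree_smult_le]\<close>)
  have R: "(\<Sum>a\<in>A. smult (c a) (ext_sum (h a) u)) = (\<Sum>a\<in>A. smult (c a) (smult (coeff (h a) 0) u + (\<Sum>k\<in>{1..N}. smult (coeff (h a) k) (pcompose (P_poly k) u))))"
    by (rule sum.cong[OF refl]) (simp add: ext_sum_bound[OF assms(2)])
  show ?thesis
    unfolding ext_sum_bound[OF dg] R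
    apply (simp add: coeff_sum smult_add_right sum.distrib smult_sum_right smult_sum)
    apply (subst (2) sum.swap)
    apply (simp add: mult.commute)
    done
qed

lemma ext_sum_monom: assumes "n \<ge> 1"
  shows "ext_sum (monom c n) u = smult c (pcompose (P_poly n) u)"
proof -
  have "ext_sum (monom c n) u = smult (coeff (monom c n) 0) u + (\<Sum>k\<in>{1..n}. smult (coeff (monom c n) k) (pcompose (P_poly k) u))"
    by (rule ext_sum_bound) (simp add: degree_monom_le)
  moreover have "coeff (monom c n) 0 = 0" using assms by (simp add: coeff_monom)
  moreover have "(\<Sum>k\<in>{1..n}. smult (coeff (monom c n) k) (pcompose (P_poly k) u)) = (\<Sum>k\<in>{1..n}. if k = n then smult c (pcompose (P_poly k) u) else 0)"
    by (rule sum.cong) (auto simp: coeff_monom)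
  moreover have "(\<Sum>k\<in>{1..n}. if k = n then smult c (pcompose (P_poly k) u) else 0) = smult c (pcompose (P_poly n) u)"
    using assms by (simp add: sum.delta)
  ultimately show ?thesis by simp
qed

lemma poly_ext_scale: "poly (ext_sum h [:0, c * s:]) 1 = poly (ext_sum h [:0, c:]) s"
  unfolding ext_sum_def by (simp add: poly_sum poly_pcompose mult.commute)

lemma degree_ext_sum: assumes "degree u \<le> 1" "degree h \<le> m"
  shows "degree (ext_sum h u) \<le> Suc m"
proof -
  have "degree (ext_sum h u) = degree (smult (coeff h 0) u + (\<Sum>k\<in>{1..m}. smult (coeff h k) (pcompose (P_poly k) u)))"
    by (simp add: ext_sum_bound[OF assms(2)])
  also have "\<dots> \<le> Suc m"
  proof (rule degree_add_le)
    show "degree (smult (coeff h 0) u) \<le> Suc m" using assms(1) degree_smult_le[of "coeff h 0" u] by linarith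
    show "degree (\<Sum>k\<in>{1..m}. smult (coeff h k) (pcompose (P_poly k) u)) \<le> Suc m"
    proof (rule degree_sum_le)
      fix k assume k: "k \<in> {1..m}"
      have "degree (pcompose (P_poly k) u) \<le> Suc k * 1"
        unfolding degree_pcompose using P_poly_degree[of k] assms(1) by (intro mult_le_mono) auto
      then show "degree (smult (coeff h k) (pcompose (P_poly k) u)) \<le> Suc m"
        using k degree_smult_le[of "coeff h k" "pcompose (P_poly k) u"] by auto
    qed simp
  qed
  finally show ?thesis .
qed

lemma degree_f_iter: "degree (f_iter a n m) \<le> m"
proof (induct m)
  case 0 then show ?case by simp
next
  case (Suc m)
  have "degree [:0, a (n - m):] \<le> 1" by (simp add: degree_pCons_le)
  then show ?case using degree_ext_sum[OF _ Suc] by simp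
qed

lemma f_iter_cong: "m \<le> n \<Longrightarrow> (\<And>j. n - m < j \<Longrightarrow> j \<le> n \<Longrightarrow> a j = b j) \<Longrightarrow> f_iter a n m = f_iter b n m"
proof (induct m)
  case 0 then show ?case by simp
next
  case (Suc m)
  have "a (n - m) = b (n - m)" using Suc.prems by (intro Suc.prems(2)) auto
  moreover have "f_iter a n m = f_iter b n m" using Suc by auto
  ultimately show ?case by simp
qed

lemma f_iter_shift: "m \<le> n \<Longrightarrow> f_iter a (Suc n) m = f_iter (\<lambda>j. a (Suc j)) n m"
proof (induct m)
  case 0 then show ?case by simp
next
  case (Suc m)
  then have "Suc n - m = Suc (n - m)" by simp
  with Suc show ?case by simp
qed

lemma f_fun_Suc: "f_fun (Suc n) a = poly (ext_sum (f_iter (\<lambda>j. a (Suc j)) n n) [:0, a 1:]) 1"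
proof -
  have "f_iter a (Suc n) (Suc n) = ext_sum (f_iter a (Suc n) n) [:0, a 1:]" by simp
  then show ?thesis unfolding f_fun_def by (simp only: f_iter_shift[OF le_refl])
qed

lemma poly_f_iter: assumes "n \<ge> 1"
  shows "poly (f_iter a n n) s = f_fun n (a(1 := s * a 1))"
proof -
  obtain m where n: "n = Suc m" using assms by (cases n) auto
  have e: "f_iter (a(1 := s * a 1)) n m = f_iter a n m"
    by (rule f_iter_cong) (auto simp: n)
  have "f_fun n (a(1 := s * a 1)) = poly (ext_sum (f_iter (a(1 := s * a 1)) n m) [:0, s * a 1:]) 1"
    unfolding f_fun_def n by simp
  also have "\<dots> = poly (ext_sum (f_iter a n m) [:0, a 1 * s:]) 1" using e by (simp add: mult.commute)
  also have "\<dots> = poly (ext_sum (f_iter a n m) [:0, a 1:]) s" by (rule poly_ext_scale)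
  also have "\<dots> = poly (f_iter a n n) s" unfolding n by simp
  finally show ?thesis by simp
qed

lemma poly_eq_nonzero: fixes p q :: "real poly"
  assumes "\<And>s. s \<noteq> 0 \<Longrightarrow> poly p s = poly q s" shows "p = q"
proof (rule ccontr)
  assume "p \<noteq> q"
  then have "finite {s. poly (p - q) s = 0}" by (intro poly_roots_finite) simp
  moreover have "- {0} \<subseteq> {s. poly (p - q) s = 0}" using assms by auto
  ultimately have "finite (- {0::real})" by (rule finite_subset[rotated])
  then show False by (simp add: infinite_UNIV_char_0)
qed

lemma DL:
  fixes u :: "nat \<Rightarrow> nat \<Rightarrow> real" and P :: real
  assumes n: "n \<ge> 1" and ne: "\<And>r. r \<in> {1..n} \<Longrightarrow> u r 1 \<noteq> u 0 1"
  shows "det (mat (Suc n) (Suc n) (\<lambda>(r,c). if c = 0 then 1 else u r c)) * (\<Prod>r\<in>{1..n}. (P - u 0 1) / (u r 1 - u 0 1))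
    = (P - u 0 1) * det (mat n n (\<lambda>(r,c). if c = 0 then 1 else u 0 (Suc c) + (P - u 0 1) / (u (Suc r) 1 - u 0 1) * (u (Suc r) (Suc c) - u 0 (Suc c))))"
proof -
  define t where "t r = (P - u 0 1) / (u r 1 - u 0 1)" for r
  define M :: "real mat" where "M = mat (Suc n) (Suc n) (\<lambda>(r,c). if c = 0 then 1 else u r c)"
  define E :: "real mat" where "E = mat (Suc n) (Suc n) (\<lambda>(r,l). (if l = 0 then (if r = 0 then 1 else 1 - t r) else 0) + (if l = r \<and> r \<noteq> 0 then t r else 0))"
  define M1 :: "real mat" where "M1 = mat (Suc n) (Suc n) (\<lambda>(r,c). if c = 0 then 1 else if r = 0 then u 0 c else u 0 c + t r * (u r c - u 0 c))"
  define M' :: "real mat" where "M' = mat n n (\<lambda>(r,c). if c = 0 then 1 else u 0 (Suc c) + t (Suc r) * (u (Suc r) (Suc c) - u 0 (Suc c)))"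
  have EM: "E * M = M1"
  proof (rule eq_matI)
    fix r c assume r: "r < dim_row M1" and c: "c < dim_col M1"
    then have r': "r < Suc n" and c': "c < Suc n" by (auto simp: M1_def)
    have "(E * M) $$ (r,c) = (\<Sum>l\<in>{0..<Suc n}. E $$ (r,l) * M $$ (l,c))"
      using r' c' by (auto simp: E_def M_def scalar_prod_def intro!: sum.cong)
    also have "\<dots> = (\<Sum>l\<in>{0..<Suc n}. (if l = 0 then (if r = 0 then 1 else 1 - t r) * M $$ (0,c) else 0) + (if l = r \<and> r \<noteq> 0 then t r * M $$ (r,c) else 0))"
      using r' c' by (intro sum.cong) (auto simp: E_def algebra_simps)
    also have "\<dots> = (if r = 0 then 1 else 1 - t r) * M $$ (0,c) + (if r \<noteq> 0 then t r * M $$ (r,c) else 0)"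
      using r' by (cases "r = 0") (simp_all add: sum.distrib)
    also have "\<dots> = M1 $$ (r,c)" using r' c' by (auto simp: M_def M1_def algebra_simps)
    finally show "(E * M) $$ (r,c) = M1 $$ (r,c)" .
  qed (simp_all add: E_def M1_def M_def)
  have Ec: "E \<in> carrier_mat (Suc n) (Suc n)" and Mc: "M \<in> carrier_mat (Suc n) (Suc n)"
    and M1c: "M1 \<in> carrier_mat (Suc n) (Suc n)" by (simp_all add: E_def M_def M1_def)
  have detE: "det E = (\<Prod>r\<in>{1..n}. t r)"
  proof -
    have "det E = prod_list (diag_mat E)"
      by (rule det_lower_triangular[OF _ Ec]) (auto simp: E_def)
    also have "\<dots> = (\<Prod>i\<in>{0..<Suc n}. E $$ (i,i))" by (simp add: prod_list_diag_prod E_def)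
    also have "{0..<Suc n} = insert 0 {1..n}" by auto
    also have "(\<Prod>i\<in>insert 0 {1..n}. E $$ (i,i)) = (\<Prod>r\<in>{1..n}. t r)"
      by (simp add: E_def)
    finally show ?thesis .
  qed
  have detM1: "det M1 = det M * (\<Prod>r\<in>{1..n}. t r)"
    using det_mult[OF Ec Mc] EM detE by simp
  define M2 where "M2 = addcol (-P) 1 0 M1"
  have detM2: "det M2 = det M1" unfolding M2_def using n by (intro det_addcol[OF _ _ M1c]) auto
  have M2c: "M2 \<in> carrier_mat (Suc n) (Suc n)" using M1c unfolding M2_def carrier_mat_def by simp
  have col: "M2 $$ (r, 1) = (if r = 0 then u 0 1 - P else 0)" if "r < Suc n" for r
    using that n ne[of r] by (auto simp: M2_def M1_def t_def)
  have del: "mat_delete M2 0 1 = M'"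
    by (rule eq_matI) (auto simp: mat_delete_def M2_def M1_def M'_def)
  have "det M2 = (\<Sum>i<Suc n. M2 $$ (i,1) * cofactor M2 i 1)"
    using n by (intro laplace_expansion_column[OF M2c]) auto
  also have "\<dots> = (\<Sum>i<Suc n. if i = 0 then (u 0 1 - P) * cofactor M2 0 1 else 0)"
  proof (rule sum.cong[OF refl])
    fix i assume "i \<in> {..<Suc n}"
    then show "M2 $$ (i,1) * cofactor M2 i 1 = (if i = 0 then (u 0 1 - P) * cofactor M2 0 1 else 0)"
      using col[of i] by simp
  qed
  also have "\<dots> = (P - u 0 1) * det M'"
    using del by (simp add: cofactor_def algebra_simps)
  finally have "det M * (\<Prod>r\<in>{1..n}. t r) = (P - u 0 1) * det M'" using detM1 detM2 by simp
  then show ?thesis unfolding M_def M'_def t_def .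
qed

lemma aff_det:
  fixes x :: "nat \<Rightarrow> nat \<Rightarrow> real" and l :: "nat \<Rightarrow> nat"
  assumes inj: "inj_on l {0..<n}" and ai: "aff_indep_fam (n - 1) (l ` {0..<n}) x" and n: "n \<ge> 1"
  shows "det (mat n n (\<lambda>(r,c). if c = 0 then 1 else x (l r) c)) \<noteq> 0"
proof
  define A :: "real mat" where "A = mat n n (\<lambda>(r,c). if c = 0 then 1 else x (l r) c)"
  have Ac: "A \<in> carrier_mat n n" by (simp add: A_def)
  assume "det (mat n n (\<lambda>(r,c). if c = 0 then 1 else x (l r) c)) = 0"
  then have "det (transpose_mat A) = 0" using det_transpose[OF Ac] by (simp add: A_def)
  then obtain v where v: "v \<in> carrier_vec n" "v \<noteq> 0\<^sub>v n" "transpose_mat A *\<^sub>v v = 0\<^sub>v n"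
    using det_0_iff_vec_prod_zero[of "transpose_mat A" n] Ac by auto
  have eq: "(\<Sum>r\<in>{0..<n}. v $ r * (if c = 0 then 1 else x (l r) c)) = 0" if c: "c < n" for c
  proof -
    have "(transpose_mat A *\<^sub>v v) $ c = 0" using v(3) c by simp
    moreover have "(transpose_mat A *\<^sub>v v) $ c = (\<Sum>r\<in>{0..<n}. v $ r * (if c = 0 then 1 else x (l r) c))"
      using c v(1) by (auto simp: A_def scalar_prod_def mult.commute intro!: sum.cong)
    ultimately show ?thesis by simp
  qed
  define cf where "cf i = v $ (inv_into {0..<n} l i)" for i
  have cfl: "cf (l r) = v $ r" if "r < n" for r using inv_into_f_f[OF inj] that by (simp add: cf_def)
  have s0: "(\<Sum>i\<in>l ` {0..<n}. cf i) = 0"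
    using eq[of 0] n by (simp add: sum.reindex[OF inj] cfl)
  have sj: "(\<Sum>i\<in>l ` {0..<n}. cf i * x i j) = 0" if "j \<in> {1..n-1}" for j
  proof -
    have "(\<Sum>i\<in>l ` {0..<n}. cf i * x i j) = (\<Sum>r\<in>{0..<n}. v $ r * (if j = 0 then 1 else x (l r) j))"
      using that by (simp add: sum.reindex[OF inj] cfl)
    also have "\<dots> = 0" using that by (intro eq) auto
    finally show ?thesis .
  qed
  have "\<forall>i\<in>l ` {0..<n}. cf i = 0"
    using ai unfolding aff_indep_fam_def using s0 sj by blast
  then have "v $ r = 0" if "r < n" for r using cfl[OF that] that by auto
  then have "v = 0\<^sub>v n" using v(1) by (intro eq_vecI) auto
  with v(2) show False by simp
qed

lemma X_alt:
  assumes "\<sigma> permutes {1..d}"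
  shows "det (X_mat d x \<sigma> d) = real_of_int (sign \<sigma>) * det (X_mat d x id d)"
  using assms finite_atLeastAtMost
proof (induct \<sigma> rule: permutes_induct)
  case id
  then show ?case by simp
next
  case (swap a b p)
  let ?t = "Transposition.transpose a b"
  define ia where "ia = Hilbert_Choice.inv p a"
  define ib where "ib = Hilbert_Choice.inv p b"
  have pia: "p ia = a" "p ib = b" unfolding ia_def ib_def using permutes_inverses(1)[OF swap(5)] by auto
  have iain: "ia \<in> {1..d}" "ib \<in> {1..d}" unfolding ia_def ib_def
    using permutes_in_image[OF permutes_inv[OF swap(5)]] swap(1,2) by auto
  have iab: "ia \<noteq> ib" using pia swap(3) by auto
  have pinv: "y = ia" if "p y = a" for y using that pia permutes_inj[OF swap(5)] by (auto simp: inj_def)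
  have pinvb: "y = ib" if "p y = b" for y using that pia permutes_inj[OF swap(5)] by (auto simp: inj_def)
  have M: "X_mat d x (?t \<circ> p) d = swaprows (ia - 1) (ib - 1) (X_mat d x p d)"
  proof (rule eq_matI)
    fix i j assume i: "i < dim_row (swaprows (ia - 1) (ib - 1) (X_mat d x p d))"
      and j: "j < dim_col (swaprows (ia - 1) (ib - 1) (X_mat d x p d))"
    then have i': "i < Suc d" and j': "j < Suc d" by (auto simp: X_mat_def)
    show "X_mat d x (?t \<circ> p) d $$ (i, j) = swaprows (ia - 1) (ib - 1) (X_mat d x p d) $$ (i, j)"
    proof (cases "i = ia - 1")
      case True
      then have "Suc i = ia" using iain by auto
      then show ?thesis using True i' j' iain iab pia by (auto simp: X_mat_def)
    next
      case False
      note F1 = False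
      show ?thesis
      proof (cases "i = ib - 1")
        case True
        then have "Suc i = ib" using iain by auto
        then show ?thesis using True F1 i' j' iain iab pia by (auto simp: X_mat_def)
      next
        case False
        have "p (Suc i) \<noteq> a" using pinv F1 by force
        moreover have "p (Suc i) \<noteq> b" using pinvb False by force
        ultimately show ?thesis using False F1 i' j' by (auto simp: X_mat_def transpose_def)
      qed
    qed
  qed (auto simp: X_mat_def)
  have A: "det (X_mat d x (?t \<circ> p) d) = - det (X_mat d x p d)"
    unfolding M using det_swaprows[of "ia - 1" "Suc d" "ib - 1" "X_mat d x p d"] iain iab
    by (auto simp: X_mat_def)
  have B: "sign (?t \<circ> p) = - sign p"
    using swap(3) by (simp add: sign_compose permutation_swap_id permutes_imp_permutation[OF _ swap(5)] sign_swap_id)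
  show ?case unfolding A B swap(4) by (simp only: of_int_minus mult_minus_left)
qed

definition ci :: "nat \<Rightarrow> nat \<Rightarrow> nat \<Rightarrow> nat" where
  "ci d i m = (if m < i then m else if m < d then Suc m else if m = d then i else m)"

definition cdd :: "nat \<Rightarrow> nat \<Rightarrow> nat" where
  "cdd d m = (if m = 1 then d else if 2 \<le> m \<and> m \<le> d then m - 1 else m)"

lemma ci_inj: assumes "i \<in> {1..d}" "x \<in> {1..d}" "y \<in> {1..d}" "ci d i x = ci d i y" shows "x = y"
  using assms unfolding ci_def by (simp split: if_splits)

lemma ci_img: assumes "i \<in> {1..d}" "x \<in> {1..d}" shows "ci d i x \<in> {1..d}"
  using assms unfolding ci_def by (simp split: if_splits)

lemma cdd_inj: assumes "x \<in> {1..d}" "y \<in> {1..d}" "cdd d x = cdd d y" shows "x = y"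
  using assms unfolding cdd_def by (simp split: if_splits)

lemma cdd_img: assumes "d \<ge> 1" "x \<in> {1..d}" shows "cdd d x \<in> {1..d}"
  using assms unfolding cdd_def by (auto split: if_splits)

lemma ci_perm: assumes "i \<in> {1..d}" shows "ci d i permutes {1..d}"
proof (rule bij_imp_permutes)
  have inj: "inj_on (ci d i) {1..d}" unfolding inj_on_def using ci_inj[OF assms] by blast
  have "ci d i ` {1..d} \<subseteq> {1..d}" using ci_img[OF assms] by blast
  then have "ci d i ` {1..d} = {1..d}" using endo_inj_surj[OF _ _ inj] by simp
  then show "bij_betw (ci d i) {1..d} {1..d}" using inj by (simp add: bij_betw_def)
  show "ci d i m = m" if "m \<notin> {1..d}" for m using that assms unfolding ci_def by (cases "m = 0") auto
qed

lemma cdd_perm: assumes "d \<ge> 1" shows "cdd d permutes {1..d}"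
proof (rule bij_imp_permutes)
  have inj: "inj_on (cdd d) {1..d}" unfolding inj_on_def using cdd_inj by blast
  have "cdd d ` {1..d} \<subseteq> {1..d}" using cdd_img[OF assms] by blast
  then have "cdd d ` {1..d} = {1..d}" using endo_inj_surj[OF _ _ inj] by simp
  then show "bij_betw (cdd d) {1..d} {1..d}" using inj by (simp add: bij_betw_def)
  show "cdd d m = m" if "m \<notin> {1..d}" for m using that assms unfolding cdd_def by (cases "m = 0") auto
qed

lemma permutes_fix_remove:
  assumes "p permutes S" "p a = a" shows "p permutes (S - {a})"
proof -
  have 1: "\<forall>x. x \<notin> S - {a} \<longrightarrow> p x = x"
    using permutes_not_in[OF assms(1)] assms(2) by blast
  have 2: "\<forall>y. \<exists>!x. p x = y" using assms(1) unfolding permutes_def by (rule conjunct2)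
  show ?thesis unfolding permutes_def using 1 2 by (rule conjI)
qed

lemma perm_decomp:
  assumes d: "d = Suc n"
  shows "(\<Sum>\<sigma> | \<sigma> permutes {1..d}. F \<sigma>) = (\<Sum>i\<in>{1..d}. \<Sum>\<sigma>' | \<sigma>' permutes {1..n}. F (ci d i \<circ> \<sigma>' \<circ> cdd d))"
proof -
  have fin: "finite {\<sigma>'. \<sigma>' permutes {1..n}}" by (rule finite_permutations) simp
  have "(\<Sum>i\<in>{1..d}. \<Sum>\<sigma>' | \<sigma>' permutes {1..n}. F (ci d i \<circ> \<sigma>' \<circ> cdd d))
      = (\<Sum>(i,\<sigma>')\<in>Sigma {1..d} (\<lambda>_. {\<sigma>'. \<sigma>' permutes {1..n}}). F (ci d i \<circ> \<sigma>' \<circ> cdd d))"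
    by (rule sum.Sigma) (simp_all add: finite_permutations)
  also have "\<dots> = (\<Sum>\<sigma> | \<sigma> permutes {1..d}. F \<sigma>)"
  proof (rule sym, rule sum.reindex_bij_witness[where j = "\<lambda>\<sigma>. (\<sigma> 1, Hilbert_Choice.inv (ci d (\<sigma> 1)) \<circ> \<sigma> \<circ> Hilbert_Choice.inv (cdd d))"
        and i = "\<lambda>(i,\<sigma>'). ci d i \<circ> \<sigma>' \<circ> cdd d"])
    have cdp: "cdd d permutes {1..d}" using d by (intro cdd_perm) simp
    fix \<sigma> assume s: "\<sigma> \<in> {\<sigma>. \<sigma> permutes {1..d}}"
    then have s: "\<sigma> permutes {1..d}" by simp
    have s1: "\<sigma> 1 \<in> {1..d}" using permutes_in_image[OF s] d by simp
    have cip: "ci d (\<sigma> 1) permutes {1..d}" by (rule ci_perm[OF s1])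
    show "(case (\<sigma> 1, Hilbert_Choice.inv (ci d (\<sigma> 1)) \<circ> \<sigma> \<circ> Hilbert_Choice.inv (cdd d)) of (i, \<sigma>') \<Rightarrow> ci d i \<circ> \<sigma>' \<circ> cdd d) = \<sigma>"
      using permutes_inverses[OF cip] permutes_inverses[OF cdp] by (simp add: fun_eq_iff)
    then show "(case (\<sigma> 1, Hilbert_Choice.inv (ci d (\<sigma> 1)) \<circ> \<sigma> \<circ> Hilbert_Choice.inv (cdd d)) of (i, \<sigma>') \<Rightarrow> F (ci d i \<circ> \<sigma>' \<circ> cdd d)) = F \<sigma>"
      by simp
    have q: "Hilbert_Choice.inv (ci d (\<sigma> 1)) \<circ> \<sigma> \<circ> Hilbert_Choice.inv (cdd d) permutes {1..d}"
      by (intro permutes_compose permutes_inv cdp cip s)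
    have "Hilbert_Choice.inv (cdd d) d = 1" using permutes_inverses(2)[OF cdp, of 1] d by (simp add: cdd_def)
    moreover have "Hilbert_Choice.inv (ci d (\<sigma> 1)) (\<sigma> 1) = d" using permutes_inverses(2)[OF cip, of d] s1 by (simp add: ci_def)
    ultimately have fx: "(Hilbert_Choice.inv (ci d (\<sigma> 1)) \<circ> \<sigma> \<circ> Hilbert_Choice.inv (cdd d)) d = d" by simp
    have e: "{1..d} - {d} = {1..n}" using d by auto
    have "Hilbert_Choice.inv (ci d (\<sigma> 1)) \<circ> \<sigma> \<circ> Hilbert_Choice.inv (cdd d) permutes {1..n}"
      using permutes_fix_remove[OF q fx] unfolding e .
    then show "(\<sigma> 1, Hilbert_Choice.inv (ci d (\<sigma> 1)) \<circ> \<sigma> \<circ> Hilbert_Choice.inv (cdd d)) \<in> Sigma {1..d} (\<lambda>_. {\<sigma>'. \<sigma>' permutes {1..n}})"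
      using s1 by simp
  next
    have cdp: "cdd d permutes {1..d}" using d by (intro cdd_perm) simp
    fix b assume b: "b \<in> Sigma {1..d} (\<lambda>_. {\<sigma>'. \<sigma>' permutes {1..n}})"
    then obtain i s' where b: "b = (i, s')" and i: "i \<in> {1..d}" and s': "s' permutes {1..n}" by auto
    have cip: "ci d i permutes {1..d}" by (rule ci_perm[OF i])
    have s'd: "s' permutes {1..d}" using d by (intro permutes_subset[OF s']) auto
    have "s' d = d" using permutes_not_in[OF s'] d by simp
    then have v1: "(ci d i \<circ> s' \<circ> cdd d) 1 = i" using i by (simp add: cdd_def ci_def)
    have e1: "Hilbert_Choice.inv (ci d i) \<circ> (ci d i \<circ> s' \<circ> cdd d) \<circ> Hilbert_Choice.inv (cdd d) = s'"
      by (rule ext) (simp only: o_apply permutes_inverses[OF cip] permutes_inverses[OF cdp])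
    show "(\<lambda>\<sigma>. (\<sigma> 1, Hilbert_Choice.inv (ci d (\<sigma> 1)) \<circ> \<sigma> \<circ> Hilbert_Choice.inv (cdd d))) ((\<lambda>(i,\<sigma>'). ci d i \<circ> \<sigma>' \<circ> cdd d) b) = b"
      unfolding b by (simp only: prod.case v1 e1)
    show "(\<lambda>(i,\<sigma>'). ci d i \<circ> \<sigma>' \<circ> cdd d) b \<in> {\<sigma>. \<sigma> permutes {1..d}}"
      unfolding b using cip cdp s'd by (auto intro!: permutes_compose)
  qed
  finally show ?thesis by simp
qed

definition tt :: "nat \<Rightarrow> (nat \<Rightarrow> nat \<Rightarrow> real) \<Rightarrow> nat \<Rightarrow> nat \<Rightarrow> real" where
  "tt d x i j = (x (Suc d) 1 - x i 1) / (x j 1 - x i 1)"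

definition yc :: "nat \<Rightarrow> (nat \<Rightarrow> nat \<Rightarrow> real) \<Rightarrow> nat \<Rightarrow> nat \<Rightarrow> nat \<Rightarrow> real" where
  "yc d x i m c = (if m = d then x (Suc d) (Suc c)
     else x i (Suc c) + tt d x i (ci d i m) * (x (ci d i m) (Suc c) - x i (Suc c)))"

lemma ci_range: assumes "i \<in> {1..d}" "m \<in> {1..<d}" shows "ci d i m \<in> {1..d}" "ci d i m \<noteq> i"
  using assms unfolding ci_def by auto

lemma sg_facts:
  assumes d: "d = Suc n" and i: "i \<in> {1..d}" and s': "s' permutes {1..n}"
  shows "(ci d i \<circ> s' \<circ> cdd d) 1 = i"
    and "\<And>r. r \<in> {1..n} \<Longrightarrow> (ci d i \<circ> s' \<circ> cdd d) (Suc r) = ci d i (s' r) \<and> s' r \<in> {1..n}"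
    and "(ci d i \<circ> s' \<circ> cdd d) permutes {1..d}"
proof -
  have "s' d = d" using permutes_not_in[OF s'] d by simp
  then show "(ci d i \<circ> s' \<circ> cdd d) 1 = i" using i by (simp add: cdd_def ci_def)
  show "(ci d i \<circ> s' \<circ> cdd d) (Suc r) = ci d i (s' r) \<and> s' r \<in> {1..n}" if r: "r \<in> {1..n}" for r
  proof
    have "cdd d (Suc r) = r" using r d by (simp add: cdd_def)
    then show "(ci d i \<circ> s' \<circ> cdd d) (Suc r) = ci d i (s' r)" by simp
    show "s' r \<in> {1..n}" using permutes_in_image[OF s'] r by simp
  qed
  have s'd: "s' permutes {1..d}" using d by (intro permutes_subset[OF s']) auto
  show "(ci d i \<circ> s' \<circ> cdd d) permutes {1..d}"
    using ci_perm[OF i] cdd_perm[of d] s'd d by (intro permutes_compose) auto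
qed

lemma ratio_lemma: fixes a b c e P W :: real
  assumes "P \<noteq> 0" "W \<noteq> 0" "a * P = W * b" "c * P = W * e"
  shows "a / c = b / e"
proof -
  have a: "a = W * b / P" and c: "c = W * e / P" using assms by (auto simp: field_simps)
  show ?thesis unfolding a c using assms(1,2) by (cases "e = 0") (auto simp: field_simps)
qed

lemma DLY:
  assumes d: "d = Suc n" and i: "i \<in> {1..d}" and s': "s' permutes {1..n}" and k: "k \<in> {1..n}"
    and dist: "\<And>j. j \<in> {1..d} \<Longrightarrow> j \<noteq> i \<Longrightarrow> x j 1 \<noteq> x i 1"
  shows "det (Y_mat x (ci d i \<circ> s' \<circ> cdd d) (Suc k)) * (\<Prod>r\<in>{1..k}. tt d x i ((ci d i \<circ> s' \<circ> cdd d) (Suc r)))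
    = (x (Suc d) 1 - x i 1) * det (Y_mat (yc d x i) s' k)"
proof -
  define \<sigma> where "\<sigma> = ci d i \<circ> s' \<circ> cdd d"
  note sf = sg_facts[OF d i s', folded \<sigma>_def]
  define u where "u r c = x (\<sigma> (Suc r)) c" for r c
  have u0: "u 0 = x i" using sf(1) by (simp add: u_def fun_eq_iff)
  have Ym: "Y_mat x \<sigma> (Suc k) = mat (Suc k) (Suc k) (\<lambda>(r,c). if c = 0 then 1 else u r c)"
    by (rule eq_matI) (auto simp: Y_mat_def u_def)
  have ne: "u r 1 \<noteq> u 0 1" if r: "r \<in> {1..k}" for r
  proof -
    have r': "r \<in> {1..n}" using r k by auto
    have "\<sigma> (Suc r) = ci d i (s' r)" "s' r \<in> {1..n}" using sf(2)[OF r'] by auto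
    moreover have "s' r \<in> {1..<d}" using \<open>s' r \<in> {1..n}\<close> d by auto
    ultimately have "\<sigma> (Suc r) \<in> {1..d}" "\<sigma> (Suc r) \<noteq> i" using ci_range[OF i] by auto
    then show ?thesis using dist u0 by (simp add: u_def)
  qed
  have "det (Y_mat x \<sigma> (Suc k)) * (\<Prod>r\<in>{1..k}. (x (Suc d) 1 - u 0 1) / (u r 1 - u 0 1))
      = (x (Suc d) 1 - u 0 1) * det (mat k k (\<lambda>(r,c). if c = 0 then 1 else u 0 (Suc c) + (x (Suc d) 1 - u 0 1) / (u (Suc r) 1 - u 0 1) * (u (Suc r) (Suc c) - u 0 (Suc c))))"
    unfolding Ym using k ne by (intro DL) auto
  also have "mat k k (\<lambda>(r,c). if c = 0 then 1 else u 0 (Suc c) + (x (Suc d) 1 - u 0 1) / (u (Suc r) 1 - u 0 1) * (u (Suc r) (Suc c) - u 0 (Suc c)))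
      = Y_mat (yc d x i) s' k"
  proof (rule eq_matI)
    fix r c assume r: "r < dim_row (Y_mat (yc d x i) s' k)" and c: "c < dim_col (Y_mat (yc d x i) s' k)"
    then have rk: "r < k" and r': "Suc r \<in> {1..n}" and c': "c < k" using k by (auto simp: Y_mat_def)
    have e: "\<sigma> (Suc (Suc r)) = ci d i (s' (Suc r))" "s' (Suc r) \<in> {1..n}" using sf(2)[OF r'] by auto
    then have "s' (Suc r) \<noteq> d" using d by auto
    then show "mat k k (\<lambda>(r,c). if c = 0 then 1 else u 0 (Suc c) + (x (Suc d) 1 - u 0 1) / (u (Suc r) 1 - u 0 1) * (u (Suc r) (Suc c) - u 0 (Suc c))) $$ (r, c)
      = Y_mat (yc d x i) s' k $$ (r, c)"
      using rk c' e sf(1) by (simp add: Y_mat_def yc_def u_def tt_def)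
  qed (auto simp: Y_mat_def)
  finally show ?thesis unfolding \<sigma>_def[symmetric] using u0 by (simp add: u_def tt_def)
qed

lemma DLX:
  assumes d: "d = Suc n" and i: "i \<in> {1..d}" and s': "s' permutes {1..n}" and k: "k \<in> {1..n}"
    and dist: "\<And>j. j \<in> {1..d} \<Longrightarrow> j \<noteq> i \<Longrightarrow> x j 1 \<noteq> x i 1" and W: "x (Suc d) 1 \<noteq> x i 1"
  shows "det (X_mat d x (ci d i \<circ> s' \<circ> cdd d) (Suc k)) * (\<Prod>r\<in>{1..k}. tt d x i ((ci d i \<circ> s' \<circ> cdd d) (Suc r)))
    = (x (Suc d) 1 - x i 1) * det (X_mat n (yc d x i) s' k)"
proof -
  define \<sigma> where "\<sigma> = ci d i \<circ> s' \<circ> cdd d"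
  note sf = sg_facts[OF d i s', folded \<sigma>_def]
  have sf1: "\<sigma> (Suc 0) = i" using sf(1) by simp
  define u where "u r c = (if r < Suc k then x (\<sigma> (Suc r)) c else x (Suc d) c)" for r c
  have u0: "u 0 = x i" using sf(1) by (simp add: u_def fun_eq_iff)
  have Xm: "X_mat d x \<sigma> (Suc k) = mat (Suc (Suc k)) (Suc (Suc k)) (\<lambda>(r,c). if c = 0 then 1 else u r c)"
    by (rule eq_matI) (auto simp: X_mat_def u_def)
  have ne: "u r 1 \<noteq> u 0 1" if r: "r \<in> {1..Suc k}" for r
  proof (cases "r = Suc k")
    case True
    then show ?thesis using W u0 by (simp add: u_def)
  next
    case False
    then have r': "r \<in> {1..n}" using r k by auto
    have "\<sigma> (Suc r) = ci d i (s' r)" "s' r \<in> {1..n}" using sf(2)[OF r'] by auto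
    moreover have "s' r \<in> {1..<d}" using \<open>s' r \<in> {1..n}\<close> d by auto
    ultimately have "\<sigma> (Suc r) \<in> {1..d}" "\<sigma> (Suc r) \<noteq> i" using ci_range[OF i] by auto
    then show ?thesis using dist u0 False r by (simp add: u_def)
  qed
  have "det (X_mat d x \<sigma> (Suc k)) * (\<Prod>r\<in>{1..Suc k}. (x (Suc d) 1 - u 0 1) / (u r 1 - u 0 1))
      = (x (Suc d) 1 - u 0 1) * det (mat (Suc k) (Suc k) (\<lambda>(r,c). if c = 0 then 1 else u 0 (Suc c) + (x (Suc d) 1 - u 0 1) / (u (Suc r) 1 - u 0 1) * (u (Suc r) (Suc c) - u 0 (Suc c))))"
    unfolding Xm using ne by (intro DL) auto
  also have "mat (Suc k) (Suc k) (\<lambda>(r,c). if c = 0 then 1 else u 0 (Suc c) + (x (Suc d) 1 - u 0 1) / (u (Suc r) 1 - u 0 1) * (u (Suc r) (Suc c) - u 0 (Suc c)))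
      = X_mat n (yc d x i) s' k"
  proof (rule eq_matI)
    fix r c assume r: "r < dim_row (X_mat n (yc d x i) s' k)" and c: "c < dim_col (X_mat n (yc d x i) s' k)"
    then have rk: "r < Suc k" and c': "c < Suc k" by (auto simp: X_mat_def)
    show "mat (Suc k) (Suc k) (\<lambda>(r,c). if c = 0 then 1 else u 0 (Suc c) + (x (Suc d) 1 - u 0 1) / (u (Suc r) 1 - u 0 1) * (u (Suc r) (Suc c) - u 0 (Suc c))) $$ (r, c)
      = X_mat n (yc d x i) s' k $$ (r, c)"
    proof (cases "r < k")
      case True
      then have r': "Suc r \<in> {1..n}" using k by auto
      have e: "\<sigma> (Suc (Suc r)) = ci d i (s' (Suc r))" "s' (Suc r) \<in> {1..n}" using sf(2)[OF r'] by auto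
      then have "s' (Suc r) \<noteq> d" using d by auto
      then show ?thesis using True rk c' e sf1 by (simp add: X_mat_def yc_def u_def tt_def)
    next
      case False
      then have rk': "r = k" using rk by simp
      have "(x (Suc d) 1 - x i 1) / (x (Suc d) 1 - x i 1) = 1" using W by simp
      then show ?thesis using rk' c' sf1 d by (simp add: X_mat_def yc_def u_def)
    qed
  qed (auto simp: X_mat_def)
  finally have "det (X_mat d x \<sigma> (Suc k)) * (\<Prod>r\<in>{1..Suc k}. (x (Suc d) 1 - u 0 1) / (u r 1 - u 0 1))
      = (x (Suc d) 1 - x i 1) * det (X_mat n (yc d x i) s' k)" using u0 by simp
  note eq1 = this
  have eq2: "(\<Prod>r\<in>{1..Suc k}. (x (Suc d) 1 - u 0 1) / (u r 1 - u 0 1)) = (\<Prod>r\<in>{1..k}. tt d x i (\<sigma> (Suc r)))"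
  proof -
    have "(\<Prod>r\<in>{1..Suc k}. (x (Suc d) 1 - u 0 1) / (u r 1 - u 0 1)) = (\<Prod>r\<in>{1..k}. (x (Suc d) 1 - u 0 1) / (u r 1 - u 0 1)) * ((x (Suc d) 1 - u 0 1) / (u (Suc k) 1 - u 0 1))"
      by simp
    also have "(x (Suc d) 1 - u 0 1) / (u (Suc k) 1 - u 0 1) = 1" using W u0 by (simp add: u_def)
    also have "(\<Prod>r\<in>{1..k}. (x (Suc d) 1 - u 0 1) / (u r 1 - u 0 1)) = (\<Prod>r\<in>{1..k}. tt d x i (\<sigma> (Suc r)))"
      using u0 by (intro prod.cong) (auto simp: u_def tt_def)
    finally show ?thesis by simp
  qed
  show ?thesis using eq1 unfolding eq2 \<sigma>_def .
qed

lemma det_two_rows_eq: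
  fixes f :: "nat \<Rightarrow> nat \<Rightarrow> real"
  assumes "f 0 1 = f 1 1" "n = 2"
  shows "det (mat n n (\<lambda>(r,c). if c = 0 then 1 else f r c)) = 0"
proof (rule det_identical_rows[of _ n 0 1])
  show "row (mat n n (\<lambda>(r,c). if c = 0 then 1 else f r c)) 0 = row (mat n n (\<lambda>(r,c). if c = 0 then 1 else f r c)) 1"
    using assms by (intro eq_vecI) (auto simp: less_2_cases_iff)
qed (use assms in auto)

definition ND :: "nat \<Rightarrow> (nat \<Rightarrow> nat \<Rightarrow> real) \<Rightarrow> bool" where
  "ND d x \<longleftrightarrow> (\<forall>\<sigma>. \<sigma> permutes {1..d} \<longrightarrow> (\<forall>k\<in>{1..d}. det (Y_mat x \<sigma> k) \<noteq> 0) \<and> (\<forall>k\<in>{1..<d}. det (X_mat d x \<sigma> k) \<noteq> 0))"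

lemma W_nz:
  assumes d: "d = Suc n" and n: "n \<ge> 1" and i: "i \<in> {1..d}" and nd: "ND d x"
  shows "x (Suc d) 1 \<noteq> x i 1"
proof
  assume eq: "x (Suc d) 1 = x i 1"
  define \<sigma> where "\<sigma> = ci d i \<circ> id \<circ> cdd d"
  have ip: "(id :: nat \<Rightarrow> nat) permutes {1..n}" by (rule permutes_id)
  note sf = sg_facts[OF d i ip, folded \<sigma>_def]
  have "det (X_mat d x \<sigma> 1) \<noteq> 0" using nd sf(3) d n unfolding ND_def by auto
  moreover have "det (X_mat d x \<sigma> 1) = 0"
    unfolding X_mat_def
    using det_two_rows_eq[of "\<lambda>r c. if r < 1 then x (\<sigma> (r + 1)) c else x (d + 1) c" "1+1"] eq sf(1)
    by simp
  ultimately show False by simp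
qed

lemma dist_nz:
  assumes d: "d = Suc n" and n: "n \<ge> 1" and i: "i \<in> {1..d}" and nd: "ND d x"
    and j: "j \<in> {1..d}" "j \<noteq> i"
  shows "x j 1 \<noteq> x i 1"
proof
  assume eq: "x j 1 = x i 1"
  define r where "r = (if j < i then j else j - 1)"
  have r: "r \<in> {1..n}" "ci d i r = j" using j i d unfolding r_def ci_def by auto
  define s' where "s' = Transposition.transpose 1 r"
  have sp: "s' permutes {1..n}" unfolding s'_def using r n by (intro permutes_swap_id) auto
  define \<sigma> where "\<sigma> = ci d i \<circ> s' \<circ> cdd d"
  note sf = sg_facts[OF d i sp, folded \<sigma>_def]
  have s2: "\<sigma> (Suc (Suc 0)) = j" using sf(2)[of 1] n r by (simp add: s'_def)
  have "det (Y_mat x \<sigma> 2) \<noteq> 0" using nd sf(3) d n unfolding ND_def by auto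
  moreover have "det (Y_mat x \<sigma> 2) = 0"
    unfolding Y_mat_def
    using det_two_rows_eq[of "\<lambda>r c. x (\<sigma> (r + 1)) c" 2] eq sf(1) s2
    by (simp add: numeral_2_eq_2)
  ultimately show False by simp
qed

lemma tprod_nz:
  assumes d: "d = Suc n" and n: "n \<ge> 1" and i: "i \<in> {1..d}" and nd: "ND d x" and s': "s' permutes {1..n}"
    and k: "k \<le> n"
  shows "(\<Prod>r\<in>{1..k}. tt d x i ((ci d i \<circ> s' \<circ> cdd d) (Suc r))) \<noteq> 0"
proof -
  note sf = sg_facts[OF d i s']
  have "tt d x i ((ci d i \<circ> s' \<circ> cdd d) (Suc r)) \<noteq> 0" if r: "r \<in> {1..k}" for r
  proof -
    have r': "r \<in> {1..n}" using r k by auto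
    have "s' r \<in> {1..<d}" using sf(2)[OF r'] d by auto
    then have j: "ci d i (s' r) \<in> {1..d}" "ci d i (s' r) \<noteq> i" using ci_range[OF i] by auto
    then have "x (ci d i (s' r)) 1 \<noteq> x i 1" using dist_nz[OF d n i nd] by auto
    moreover have "x (Suc d) 1 \<noteq> x i 1" using W_nz[OF d n i nd] .
    ultimately show ?thesis using sf(2)[OF r'] by (simp add: tt_def)
  qed
  then show ?thesis by (simp add: prod_zero_iff)
qed

lemma ND_y:
  assumes d: "d = Suc n" and n: "n \<ge> 1" and i: "i \<in> {1..d}" and nd: "ND d x"
  shows "ND n (yc d x i)"
  unfolding ND_def
proof (intro allI impI conjI ballI)
  fix s' :: "nat \<Rightarrow> nat" assume s': "s' permutes {1..n}"
  note sf = sg_facts[OF d i s']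
  note dist = dist_nz[OF d n i nd]
  note W = W_nz[OF d n i nd]
  have Wn: "x (Suc d) 1 - x i 1 \<noteq> 0" using W by simp
  fix k
  {
    assume k: "k \<in> {1..n}"
    have dXY: "det (Y_mat x (ci d i \<circ> s' \<circ> cdd d) (Suc k)) \<noteq> 0" using nd sf(3) k d unfolding ND_def by auto
    have kn: "k \<le> n" using k by simp
    have "det (Y_mat x (ci d i \<circ> s' \<circ> cdd d) (Suc k)) * (\<Prod>r\<in>{1..k}. tt d x i ((ci d i \<circ> s' \<circ> cdd d) (Suc r))) \<noteq> 0"
      using dXY tprod_nz[OF d n i nd s' kn] by simp
    then have "(x (Suc d) 1 - x i 1) * det (Y_mat (yc d x i) s' k) \<noteq> 0" using DLY[where x=x, OF d i s' k dist] by metis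
    then show "det (Y_mat (yc d x i) s' k) \<noteq> 0" by simp
  }
  {
    assume k: "k \<in> {1..<n}"
    then have k': "k \<in> {1..n}" by simp
    have dXY: "det (X_mat d x (ci d i \<circ> s' \<circ> cdd d) (Suc k)) \<noteq> 0" using nd sf(3) k d unfolding ND_def by auto
    have kn: "k \<le> n" using k by simp
    have "det (X_mat d x (ci d i \<circ> s' \<circ> cdd d) (Suc k)) * (\<Prod>r\<in>{1..k}. tt d x i ((ci d i \<circ> s' \<circ> cdd d) (Suc r))) \<noteq> 0"
      using dXY tprod_nz[OF d n i nd s' kn] by simp
    then have "(x (Suc d) 1 - x i 1) * det (X_mat n (yc d x i) s' k) \<noteq> 0" using DLX[where x=x, OF d i s' k' dist W] by metis
    then show "det (X_mat n (yc d x i) s' k) \<noteq> 0" by simp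
  }
qed

lemma Z2:
  assumes d: "d = Suc n" and n: "n \<ge> 1" and i: "i \<in> {1..d}" and nd: "ND d x" and s': "s' permutes {1..n}"
    and k: "k \<in> {1..n}"
  shows "z_val d x (ci d i \<circ> s' \<circ> cdd d) (Suc k) = z_val n (yc d x i) s' k"
proof -
  note dist = dist_nz[OF d n i nd]
  note W = W_nz[OF d n i nd]
  have kn: "k \<le> n" using k by simp
  show ?thesis unfolding z_val_def
    by (rule ratio_lemma[OF tprod_nz[OF d n i nd s' kn] _ DLX[where x=x, OF d i s' k dist W] DLY[where x=x, OF d i s' k dist]])
      (use W in auto)
qed

lemma Z1:
  assumes d: "d = Suc n" and n: "n \<ge> 1" and i: "i \<in> {1..d}" and nd: "ND d x" and s': "s' permutes {1..n}"
  shows "z_val d x (ci d i \<circ> s' \<circ> cdd d) 1 = x (Suc d) 1 - x i 1"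
proof -
  define \<sigma> where "\<sigma> = ci d i \<circ> s' \<circ> cdd d"
  note sf = sg_facts[OF d i s', folded \<sigma>_def]
  note W = W_nz[OF d n i nd]
  define u where "u r c = (if r < 1 then x (\<sigma> (r + 1)) c else x (d + 1) c)" for r c
  have u0: "u 0 = x i" using sf(1) by (simp add: u_def fun_eq_iff)
  have Xm: "X_mat d x \<sigma> 1 = mat (Suc 1) (Suc 1) (\<lambda>(r,c). if c = 0 then 1 else u r c)"
    by (rule eq_matI) (auto simp: X_mat_def u_def)
  have "det (X_mat d x \<sigma> 1) * (\<Prod>r\<in>{1..1}. (x (Suc d) 1 - u 0 1) / (u r 1 - u 0 1))
     = (x (Suc d) 1 - u 0 1) * det (mat 1 1 (\<lambda>(r,c). if c = 0 then 1 else u 0 (Suc c) + (x (Suc d) 1 - u 0 1) / (u (Suc r) 1 - u 0 1) * (u (Suc r) (Suc c) - u 0 (Suc c))))"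
    unfolding Xm using W u0 by (intro DL) (auto simp: u_def)
  moreover have "(\<Prod>r\<in>{1..1}. (x (Suc d) 1 - u 0 1) / (u r 1 - u 0 1)) = 1" using W u0 by (simp add: u_def)
  moreover have "det (mat 1 1 (\<lambda>(r,c). if c = 0 then 1 else u 0 (Suc c) + (x (Suc d) 1 - u 0 1) / (u (Suc r) 1 - u 0 1) * (u (Suc r) (Suc c) - u 0 (Suc c)))) = 1"
    by (subst det_single) auto
  ultimately have dx: "det (X_mat d x \<sigma> 1) = x (Suc d) 1 - x i 1" using u0 by simp
  have dy: "det (Y_mat x \<sigma> 1) = 1" unfolding Y_mat_def by (subst det_single) auto
  show ?thesis unfolding z_val_def \<sigma>_def[symmetric] dx dy by simp
qed

definition LHS :: "nat \<Rightarrow> (nat \<Rightarrow> nat \<Rightarrow> real) \<Rightarrow> real \<Rightarrow> real" where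
  "LHS d x l = (\<Sum>\<sigma> | \<sigma> permutes {1..d}. real_of_int (sign \<sigma>) * g_fun d (\<lambda>k. l * z_val d x \<sigma> k))"

lemma LHS_base: "LHS 1 x l = l ^ 1 * det (X_mat 1 x id 1) / fact 1"
proof -
  have "{\<sigma>. \<sigma> permutes {1..1::nat}} = {id}" by auto
  then have "LHS 1 x l = g_fun 1 (\<lambda>k. l * z_val 1 x id k)" unfolding LHS_def by simp
  also have "\<dots> = l * z_val 1 x id 1"
    unfolding g_fun_def f_fun_def by (simp add: ext_sum_def)
  also have "det (Y_mat x id 1) = 1" unfolding Y_mat_def by (subst det_single) auto
  then have "z_val 1 x id 1 = det (X_mat 1 x id 1)" unfolding z_val_def by simp
  finally show ?thesis by simp
qed

lemma g_expand:
  assumes d: "d = Suc n" and n: "n \<ge> 1" and i: "i \<in> {1..d}" and nd: "ND d x" and s': "s' permutes {1..n}"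
    and l: "l \<noteq> 0"
  shows "g_fun d (\<lambda>k. l * z_val d x (ci d i \<circ> s' \<circ> cdd d) k)
    = poly (ext_sum (f_iter (\<lambda>j. z_val d x (ci d i \<circ> s' \<circ> cdd d) (Suc j) / z_val d x (ci d i \<circ> s' \<circ> cdd d) j) n n)
        [:0, l * (x (Suc d) 1 - x i 1):]) 1"
proof -
  define z where "z = z_val d x (ci d i \<circ> s' \<circ> cdd d)"
  define a where "a = (\<lambda>j. if j = 1 then l * z 1 else l * z j / (l * z (j - 1)))"
  have "g_fun d (\<lambda>k. l * z k) = f_fun (Suc n) a" unfolding g_fun_def a_def d by simp
  also have "\<dots> = poly (ext_sum (f_iter (\<lambda>j. a (Suc j)) n n) [:0, a 1:]) 1" by (rule f_fun_Suc)
  also have "f_iter (\<lambda>j. a (Suc j)) n n = f_iter (\<lambda>j. z (Suc j) / z j) n n"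
    by (rule f_iter_cong) (use l in \<open>auto simp: a_def\<close>)
  also have "a 1 = l * (x (Suc d) 1 - x i 1)" unfolding a_def z_def using Z1[OF d n i nd s'] by simp
  finally show ?thesis unfolding z_def .
qed

lemma H_poly:
  assumes d: "d = Suc n" and n: "n \<ge> 1" and i: "i \<in> {1..d}" and nd: "ND d x" and s': "s' permutes {1..n}"
    and s: "s \<noteq> 0"
  shows "poly (f_iter (\<lambda>j. z_val d x (ci d i \<circ> s' \<circ> cdd d) (Suc j) / z_val d x (ci d i \<circ> s' \<circ> cdd d) j) n n) s
    = g_fun n (\<lambda>k. (s / (x (Suc d) 1 - x i 1)) * z_val n (yc d x i) s' k)"
proof -
  define z where "z = z_val d x (ci d i \<circ> s' \<circ> cdd d)"
  define zy where "zy = z_val n (yc d x i) s'"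
  define W where "W = x (Suc d) 1 - x i 1"
  have W0: "W \<noteq> 0" using W_nz[OF d n i nd] by (simp add: W_def)
  define \<mu> where "\<mu> = s / W"
  have mu0: "\<mu> \<noteq> 0" using s W0 by (simp add: \<mu>_def)
  have z1: "z 1 = W" unfolding z_def W_def by (rule Z1[OF d n i nd s'])
  have z2: "z (Suc k) = zy k" if "k \<in> {1..n}" for k unfolding z_def zy_def by (rule Z2[OF d n i nd s' that])
  define A where "A = (\<lambda>j. z (Suc j) / z j)"
  have "poly (f_iter A n n) s = f_fun n (A(1 := s * A 1))" by (rule poly_f_iter[OF n])
  also have "\<dots> = f_fun n (\<lambda>j. if j = 1 then \<mu> * zy 1 else \<mu> * zy j / (\<mu> * zy (j - 1)))"
    unfolding f_fun_def
  proof (rule arg_cong[where f = "\<lambda>p. poly p 1"], rule f_iter_cong)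
    fix j assume j: "n - n < j" "j \<le> n"
    show "(A(1 := s * A 1)) j = (if j = 1 then \<mu> * zy 1 else \<mu> * zy j / (\<mu> * zy (j - 1)))"
    proof (cases "j = 1")
      case True
      then show ?thesis using z1 z2[of 1] n W0 by (simp add: A_def \<mu>_def)
    next
      case False
      then have "j - 1 \<in> {1..n}" "j \<in> {1..n}" and jj: "Suc (j - 1) = j" using j by auto
      then have "z j = zy (j - 1)" "z (Suc j) = zy j" using z2 by (metis, metis)
      then show ?thesis using False mu0 by (simp add: A_def)
    qed
  qed simp
  finally show ?thesis unfolding A_def z_def zy_def g_fun_def \<mu>_def W_def .
qed

definition Hf :: "nat \<Rightarrow> nat \<Rightarrow> (nat \<Rightarrow> nat \<Rightarrow> real) \<Rightarrow> nat \<Rightarrow> (nat \<Rightarrow> nat) \<Rightarrow> real poly" where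
  "Hf d n x i s' = f_iter (\<lambda>j. z_val d x (ci d i \<circ> s' \<circ> cdd d) (Suc j) / z_val d x (ci d i \<circ> s' \<circ> cdd d) j) n n"

lemma sum_H:
  assumes d: "d = Suc n" and n: "n \<ge> 1" and i: "i \<in> {1..d}" and nd: "ND d x"
    and IH: "\<And>y \<mu>. ND n y \<Longrightarrow> \<mu> \<noteq> 0 \<Longrightarrow> LHS n y \<mu> = \<mu> ^ n * det (X_mat n y id n) / fact n"
  shows "(\<Sum>s'\<in>{s'. s' permutes {1..n}}. smult (of_int (sign s')) (Hf d n x i s'))
     = monom (det (X_mat n (yc d x i) id n) / ((x (Suc d) 1 - x i 1) ^ n * fact n)) n"
proof (rule poly_eq_nonzero)
  fix s :: real assume s: "s \<noteq> 0"
  define W where "W = x (Suc d) 1 - x i 1"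
  have W0: "W \<noteq> 0" using W_nz[OF d n i nd] by (simp add: W_def)
  have mu0: "s / W \<noteq> 0" using s W0 by simp
  have "poly (\<Sum>s'\<in>{s'. s' permutes {1..n}}. smult (of_int (sign s')) (Hf d n x i s')) s
      = (\<Sum>s'\<in>{s'. s' permutes {1..n}}. of_int (sign s') * poly (Hf d n x i s') s)"
    by (simp add: poly_sum)
  also have "\<dots> = (\<Sum>s'\<in>{s'. s' permutes {1..n}}. of_int (sign s') * g_fun n (\<lambda>k. (s / W) * z_val n (yc d x i) s' k))"
    by (rule sum.cong[OF refl]) (simp add: Hf_def W_def H_poly[OF d n i nd _ s])
  also have "\<dots> = LHS n (yc d x i) (s / W)" unfolding LHS_def by simp
  also have "\<dots> = (s / W) ^ n * det (X_mat n (yc d x i) id n) / fact n"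
    by (rule IH[OF ND_y[OF d n i nd] mu0])
  also have "\<dots> = poly (monom (det (X_mat n (yc d x i) id n) / (W ^ n * fact n)) n) s"
    by (simp add: poly_monom power_divide field_simps)
  finally show "poly (\<Sum>s'\<in>{s'. s' permutes {1..n}}. smult (of_int (sign s')) (Hf d n x i s')) s
     = poly (monom (det (X_mat n (yc d x i) id n) / ((x (Suc d) 1 - x i 1) ^ n * fact n)) n) s"
    unfolding W_def .
qed

lemma S_i:
  assumes d: "d = Suc n" and n: "n \<ge> 1" and i: "i \<in> {1..d}" and nd: "ND d x" and l: "l \<noteq> 0"
    and IH: "\<And>y \<mu>. ND n y \<Longrightarrow> \<mu> \<noteq> 0 \<Longrightarrow> LHS n y \<mu> = \<mu> ^ n * det (X_mat n y id n) / fact n"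
  shows "(\<Sum>s'\<in>{s'. s' permutes {1..n}}. real_of_int (sign (ci d i \<circ> s' \<circ> cdd d)) * g_fun d (\<lambda>k. l * z_val d x (ci d i \<circ> s' \<circ> cdd d) k))
    = real_of_int (sign (ci d i) * sign (cdd d)) * (det (X_mat n (yc d x i) id n) / ((x (Suc d) 1 - x i 1) ^ n * fact n))
       * poly (P_poly n) (l * (x (Suc d) 1 - x i 1))"
proof -
  define U where "U = [:0, l * (x (Suc d) 1 - x i 1):]"
  define K where "K = det (X_mat n (yc d x i) id n) / ((x (Suc d) 1 - x i 1) ^ n * fact n)"
  define P where "P = {s'. s' permutes {1..n}}"
  have finP: "finite P" unfolding P_def by (rule finite_permutations) simp
  have cip: "ci d i permutes {1..d}" by (rule ci_perm[OF i])
  have cdp: "cdd d permutes {1..d}" using d by (intro cdd_perm) simp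
  have sgn: "sign (ci d i \<circ> s' \<circ> cdd d) = sign (ci d i) * sign (cdd d) * sign s'" if "s' \<in> P" for s'
  proof -
    have s'p: "s' permutes {1..n}" using that by (simp add: P_def)
    have p1: "permutation (ci d i)" by (rule permutes_imp_permutation[OF _ cip]) simp
    have p2: "permutation (cdd d)" by (rule permutes_imp_permutation[OF _ cdp]) simp
    have p3: "permutation s'" by (rule permutes_imp_permutation[OF _ s'p]) simp
    have "sign (ci d i \<circ> s' \<circ> cdd d) = sign (ci d i \<circ> s') * sign (cdd d)"
      by (rule sign_compose[OF permutation_compose[OF p1 p3] p2])
    also have "sign (ci d i \<circ> s') = sign (ci d i) * sign s'" by (rule sign_compose[OF p1 p3])
    finally show ?thesis by (simp only: mult.assoc mult.commute mult.left_commute)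
  qed
  have "(\<Sum>s'\<in>P. real_of_int (sign (ci d i \<circ> s' \<circ> cdd d)) * g_fun d (\<lambda>k. l * z_val d x (ci d i \<circ> s' \<circ> cdd d) k))
      = (\<Sum>s'\<in>P. real_of_int (sign (ci d i) * sign (cdd d)) * (of_int (sign s') * poly (ext_sum (Hf d n x i s') U) 1))"
    by (rule sum.cong[OF refl]) (simp add: sgn P_def g_expand[OF d n i nd _ l] Hf_def U_def)
  also have "\<dots> = real_of_int (sign (ci d i) * sign (cdd d)) * poly (\<Sum>s'\<in>P. smult (of_int (sign s')) (ext_sum (Hf d n x i s') U)) 1"
    by (simp add: poly_sum sum_distrib_left)
  also have "(\<Sum>s'\<in>P. smult (of_int (sign s')) (ext_sum (Hf d n x i s') U)) = ext_sum (\<Sum>s'\<in>P. smult (of_int (sign s')) (Hf d n x i s')) U"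
    by (rule ext_sum_lin[symmetric, OF finP, where N = n]) (simp add: Hf_def degree_f_iter)
  also have "(\<Sum>s'\<in>P. smult (of_int (sign s')) (Hf d n x i s')) = monom K n"
    unfolding P_def K_def by (rule sum_H[OF d n i nd IH])
  also have "ext_sum (monom K n) U = smult K (pcompose (P_poly n) U)" by (rule ext_sum_monom[OF n])
  finally have eq: "(\<Sum>s'\<in>P. real_of_int (sign (ci d i \<circ> s' \<circ> cdd d)) * g_fun d (\<lambda>k. l * z_val d x (ci d i \<circ> s' \<circ> cdd d) k))
      = real_of_int (sign (ci d i) * sign (cdd d)) * poly (smult K (pcompose (P_poly n) U)) 1" .
  have pe: "poly (smult K (pcompose (P_poly n) U)) 1 = (det (X_mat n (yc d x i) id n) / ((x (Suc d) 1 - x i 1) ^ n * fact n))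
       * poly (P_poly n) (l * (x (Suc d) 1 - x i 1))"
    by (simp add: U_def K_def poly_pcompose)
  show ?thesis using eq unfolding pe P_def by (simp only: mult.assoc)
qed

definition Wv :: "nat \<Rightarrow> (nat \<Rightarrow> nat \<Rightarrow> real) \<Rightarrow> nat \<Rightarrow> real" where
  "Wv d x j = x (Suc d) 1 - x j 1"

lemma ci_image: assumes d: "d = Suc n" and i: "i \<in> {1..d}" shows "ci d i ` {1..n} = {1..d} - {i}"
proof
  show "ci d i ` {1..n} \<subseteq> {1..d} - {i}" using ci_range[OF i] d by auto
  show "{1..d} - {i} \<subseteq> ci d i ` {1..n}"
  proof
    fix j assume j: "j \<in> {1..d} - {i}"
    define r where "r = (if j < i then j else j - 1)"
    have "r \<in> {1..n}" "ci d i r = j" using j i d unfolding r_def ci_def by auto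
    then show "j \<in> ci d i ` {1..n}" by force
  qed
qed

lemma ci_inj_on: assumes d: "d = Suc n" and i: "i \<in> {1..d}" shows "inj_on (ci d i) {1..n}"
  unfolding inj_on_def using ci_inj[OF i] d by auto

lemma V_i:
  assumes d: "d = Suc n" and n: "n \<ge> 1" and i: "i \<in> {1..d}" and nd: "ND d x"
  shows "real_of_int (sign (ci d i) * sign (cdd d)) * (det (X_mat n (yc d x i) id n) / ((x (Suc d) 1 - x i 1) ^ n * fact n))
    = det (X_mat d x id d) / (fact n * Wv d x i * (\<Prod>j\<in>{1..d}-{i}. (Wv d x i - Wv d x j)))"
proof -
  note dist = dist_nz[OF d n i nd]
  note W = W_nz[OF d n i nd]
  have W0: "Wv d x i \<noteq> 0" using W by (simp add: Wv_def)
  define D where "D = (\<Prod>j\<in>{1..d}-{i}. (Wv d x i - Wv d x j))"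
  have D0: "D \<noteq> 0" unfolding D_def using dist by (auto simp: Wv_def prod_zero_iff)
  have ip: "(id :: nat \<Rightarrow> nat) permutes {1..n}" by (rule permutes_id)
  note sf = sg_facts[OF d i ip]
  define e where "e = real_of_int (sign (ci d i) * sign (cdd d))"
  have ss: "(sign (ci d i) * sign (cdd d)) * (sign (ci d i) * sign (cdd d)) = 1"
    by (simp add: mult_ac)
  have ee: "e * e = 1" unfolding e_def of_int_mult[symmetric] ss by simp
  have cip: "ci d i permutes {1..d}" by (rule ci_perm[OF i])
  have cdp: "cdd d permutes {1..d}" using d by (intro cdd_perm) simp
  have p1: "permutation (ci d i)" by (rule permutes_imp_permutation[OF _ cip]) simp
  have p2: "permutation (cdd d)" by (rule permutes_imp_permutation[OF _ cdp]) simp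
  have sgn: "sign (ci d i \<circ> id \<circ> cdd d) = sign (ci d i) * sign (cdd d)"
    using sign_compose[OF p1 p2] by simp
  have nn: "n \<in> {1..n}" using n by simp
  have dl: "det (X_mat d x (ci d i \<circ> id \<circ> cdd d) (Suc n)) * (\<Prod>r\<in>{1..n}. tt d x i ((ci d i \<circ> id \<circ> cdd d) (Suc r)))
      = (x (Suc d) 1 - x i 1) * det (X_mat n (yc d x i) id n)"
    by (rule DLX[where x=x, OF d i ip nn dist W])
  have alt: "det (X_mat d x (ci d i \<circ> id \<circ> cdd d) d) = e * det (X_mat d x id d)"
    unfolding e_def using X_alt[OF sf(3)] sgn by simp
  have "(\<Prod>r\<in>{1..n}. tt d x i ((ci d i \<circ> id \<circ> cdd d) (Suc r))) = (\<Prod>r\<in>{1..n}. tt d x i (ci d i r))"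
    by (rule prod.cong[OF refl]) (use sf(2) in simp)
  also have "\<dots> = (\<Prod>j\<in>{1..d}-{i}. tt d x i j)"
    using prod.reindex[OF ci_inj_on[OF d i], of "tt d x i"] ci_image[OF d i] by simp
  also have "\<dots> = (\<Prod>j\<in>{1..d}-{i}. Wv d x i / (Wv d x i - Wv d x j))"
    by (rule prod.cong[OF refl]) (simp add: tt_def Wv_def)
  also have "\<dots> = Wv d x i ^ n / D"
    unfolding D_def prod_dividef using i d by (simp add: card_Diff_singleton)
  finally have Pi: "(\<Prod>r\<in>{1..n}. tt d x i ((ci d i \<circ> id \<circ> cdd d) (Suc r))) = Wv d x i ^ n / D" .
  have dl2: "e * det (X_mat d x id d) * (Wv d x i ^ n / D) = Wv d x i * det (X_mat n (yc d x i) id n)"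
    using dl unfolding Pi alt d[symmetric] by (simp add: Wv_def)
  have dy: "det (X_mat n (yc d x i) id n) = e * det (X_mat d x id d) * (Wv d x i ^ n / D) / Wv d x i"
    unfolding dl2 using W0 by simp
  have "e * (det (X_mat n (yc d x i) id n) / ((x (Suc d) 1 - x i 1) ^ n * fact n))
      = (e * e) * det (X_mat d x id d) * (Wv d x i ^ n / D) / Wv d x i / (Wv d x i ^ n * fact n)"
    unfolding dy by (simp add: Wv_def)
  also have "\<dots> = det (X_mat d x id d) / (fact n * Wv d x i * D)"
  proof -
    have "Wv d x i ^ n \<noteq> 0" using W0 by simp
    moreover have "(fact n :: real) \<noteq> 0" by simp
    ultimately show ?thesis unfolding ee using W0 D0 by (simp add: field_simps)
  qed
  finally show ?thesis unfolding e_def D_def .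
qed
lemma lagrange_sum:
  fixes f :: "nat \<Rightarrow> real"
  assumes fin: "finite W" and inj: "inj_on f W" and m: "m < card W"
  shows "(\<Sum>i\<in>W. f i ^ m / (\<Prod>j\<in>W-{i}. (f i - f j))) = (if m = card W - 1 then 1 else 0)"
proof -
  define K where "K = card W - 1"
  have cWK: "card W = Suc K" using m unfolding K_def by simp
  define c where "c i = f i ^ m / (\<Prod>j\<in>W-{i}. (f i - f j))" for i
  define L where "L = (\<Sum>i\<in>W. smult (c i) (\<Prod>j\<in>W-{i}. [:- f j, 1:]))"
  have nz: "(\<Prod>j\<in>W-{i}. (f i - f j)) \<noteq> 0" if "i \<in> W" for i
    using inj that fin by (auto simp: inj_on_def)
  have degP: "degree (\<Prod>j\<in>W-{i}. [:- f j, 1:]) = K" if "i \<in> W" for i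
    using fin that cWK by (simp add: degree_prod_sum_eq card_Diff_singleton)
  have leadP: "coeff (\<Prod>j\<in>W-{i}. [:- f j, 1:]) (K) = 1" if "i \<in> W" for i
    using lead_coeff_prod[of "\<lambda>j. [:- f j, 1:]" "W - {i}"] degP[OF that] by simp
  have dsm: "degree (smult (c i) (\<Prod>j\<in>W-{i}. [:- f j, 1:])) \<le> K" if "i \<in> W" for i
    using degree_smult_le[of "c i" "\<Prod>j\<in>W-{i}. [:- f j, 1:]"] degP[OF that] by linarith
  have degL: "degree L \<le> K"
    unfolding L_def by (rule degree_sum_le) (use dsm fin in auto)
  have pv: "poly L (f k) = f k ^ m" if k: "k \<in> W" for k
  proof -
    have "poly L (f k) = (\<Sum>i\<in>W. c i * (\<Prod>j\<in>W-{i}. (f k - f j)))"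
      unfolding L_def by (simp add: poly_sum poly_prod)
    also have "\<dots> = (\<Sum>i\<in>W. if i = k then c k * (\<Prod>j\<in>W-{k}. (f k - f j)) else 0)"
    proof (rule sum.cong[OF refl])
      fix i assume i: "i \<in> W"
      show "c i * (\<Prod>j\<in>W-{i}. (f k - f j)) = (if i = k then c k * (\<Prod>j\<in>W-{k}. (f k - f j)) else 0)"
      proof (cases "i = k")
        case False
        then have "(\<Prod>j\<in>W-{i}. (f k - f j)) = 0" using k fin by (intro prod_zero) auto
        then show ?thesis using False by simp
      qed simp
    qed
    also have "\<dots> = f k ^ m" using k fin nz[OF k] by (simp add: c_def)
    finally show ?thesis .
  qed
  have "L = monom 1 m"
  proof (rule poly_eqI_degree[of "f ` W"])
    show "poly L x = poly (monom 1 m) x" if "x \<in> f ` W" for x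
      using that pv by (auto simp: poly_monom)
    have cW: "card (f ` W) = card W" using card_image[OF inj] .
    show "degree L < card (f ` W)" using degL cWK cW by linarith
    show "degree (monom (1::real) m) < card (f ` W)" using m cW by (simp add: degree_monom_eq)
  qed
  then have "coeff L (K) = (if m = K then 1 else 0)" by (simp add: coeff_monom)
  moreover have "coeff L (K) = (\<Sum>i\<in>W. c i)"
    unfolding L_def coeff_sum coeff_smult by (rule sum.cong[OF refl]) (simp add: leadP)
  ultimately have "(\<Sum>i\<in>W. c i) = (if m = K then 1 else 0)" by simp
  then show ?thesis unfolding c_def K_def .
qed


lemma step:
  assumes d: "d = Suc n" and n: "n \<ge> 1" and nd: "ND d x" and l: "l \<noteq> 0"
    and IH: "\<And>y \<mu>. ND n y \<Longrightarrow> \<mu> \<noteq> 0 \<Longrightarrow> LHS n y \<mu> = \<mu> ^ n * det (X_mat n y id n) / fact n"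
  shows "LHS d x l = l ^ d * det (X_mat d x id d) / fact d"
proof -
  define X where "X = det (X_mat d x id d)"
  define W where "W = Wv d x"
  define D where "D i = (\<Prod>j\<in>{1..d}-{i}. (W i - W j))" for i
  define p where "p m = coeff (P_poly n) m" for m
  have W0: "W i \<noteq> 0" if "i \<in> {1..d}" for i using W_nz[OF d n that nd] by (simp add: W_def Wv_def)
  have Wdist: "W i \<noteq> W j" if "i \<in> {1..d}" "j \<in> {1..d}" "j \<noteq> i" for i j
    using dist_nz[OF d n that(1) nd that(2,3)] by (simp add: W_def Wv_def)
  have D0: "D i \<noteq> 0" if "i \<in> {1..d}" for i unfolding D_def using Wdist[OF that] by (auto simp: prod_zero_iff)
  have "LHS d x l = (\<Sum>i\<in>{1..d}. \<Sum>s'\<in>{s'. s' permutes {1..n}}. real_of_int (sign (ci d i \<circ> s' \<circ> cdd d)) * g_fun d (\<lambda>k. l * z_val d x (ci d i \<circ> s' \<circ> cdd d) k))"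
    unfolding LHS_def by (rule perm_decomp[OF d])
  also have "\<dots> = (\<Sum>i\<in>{1..d}. X / (fact n * W i * D i) * poly (P_poly n) (l * W i))"
  proof (rule sum.cong[OF refl])
    fix i assume i: "i \<in> {1..d}"
    show "(\<Sum>s'\<in>{s'. s' permutes {1..n}}. real_of_int (sign (ci d i \<circ> s' \<circ> cdd d)) * g_fun d (\<lambda>k. l * z_val d x (ci d i \<circ> s' \<circ> cdd d) k))
        = X / (fact n * W i * D i) * poly (P_poly n) (l * W i)"
    proof -
      have s1: "(\<Sum>s'\<in>{s'. s' permutes {1..n}}. real_of_int (sign (ci d i \<circ> s' \<circ> cdd d)) * g_fun d (\<lambda>k. l * z_val d x (ci d i \<circ> s' \<circ> cdd d) k))
         = real_of_int (sign (ci d i) * sign (cdd d)) * (det (X_mat n (yc d x i) id n) / ((x (Suc d) 1 - x i 1) ^ n * fact n))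
       * poly (P_poly n) (l * (x (Suc d) 1 - x i 1))"
        by (rule S_i[OF d n i nd l IH])
      show ?thesis unfolding s1 V_i[OF d n i nd] X_def W_def D_def by (simp add: Wv_def)
    qed
  qed
  also have "\<dots> = (\<Sum>i\<in>{1..d}. \<Sum>m\<in>{1..Suc n}. X / (fact n * W i * D i) * (p m * (l * W i) ^ m))"
    by (rule sum.cong[OF refl]) (simp only: poly_P_poly[OF n] p_def sum_distrib_left)
  also have "\<dots> = (\<Sum>i\<in>{1..d}. \<Sum>m\<in>{1..Suc n}. p m * l ^ m * (X / fact n) * (W i ^ (m - 1) / D i))"
  proof (intro sum.cong refl)
    fix i m assume i: "i \<in> {1..d}" and m: "m \<in> {1..Suc n}"
    then obtain m' where m': "m = Suc m'" by (cases m) auto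
    have "(fact n :: real) \<noteq> 0" by simp
    then show "X / (fact n * W i * D i) * (p m * (l * W i) ^ m) = p m * l ^ m * (X / fact n) * (W i ^ (m - 1) / D i)"
      unfolding m' using W0[OF i] D0[OF i] by (simp add: field_simps power_mult_distrib)
  qed
  also have "\<dots> = (\<Sum>m\<in>{1..Suc n}. p m * l ^ m * (X / fact n) * (\<Sum>i\<in>{1..d}. W i ^ (m - 1) / D i))"
    by (subst sum.swap) (simp add: sum_distrib_left)
  also have "\<dots> = (\<Sum>m\<in>{1..Suc n}. if m = Suc n then p m * l ^ m * (X / fact n) else 0)"
  proof (rule sum.cong[OF refl])
    fix m assume m: "m \<in> {1..Suc n}"
    have inj: "inj_on W {1..d}" unfolding inj_on_def using Wdist by metis
    have "(\<Sum>i\<in>{1..d}. W i ^ (m - 1) / D i) = (if m - 1 = card {1..d} - 1 then 1 else 0)"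
      unfolding D_def by (rule lagrange_sum[OF _ inj]) (use m d in auto)
    also have "\<dots> = (if m = Suc n then 1 else 0)" using m d by auto
    finally show "p m * l ^ m * (X / fact n) * (\<Sum>i\<in>{1..d}. W i ^ (m - 1) / D i) = (if m = Suc n then p m * l ^ m * (X / fact n) else 0)"
      by simp
  qed
  also have "\<dots> = p (Suc n) * l ^ Suc n * (X / fact n)" by (simp add: sum.delta')
  also have "\<dots> = l ^ d * X / fact d" unfolding p_def P_poly_lead d by (simp add: field_simps)
  finally show ?thesis unfolding X_def .
qed

lemma main_lemma:
  assumes "d \<ge> 1" "ND d x" "l \<noteq> 0"
  shows "LHS d x l = l ^ d * det (X_mat d x id d) / fact d"
  using assms
proof (induct d arbitrary: x l rule: nat_induct_at_least)
  case base
  show ?case by (rule LHS_base)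
next
  case (Suc n)
  show ?case by (rule step[OF refl Suc(1) Suc(3) Suc(4) Suc(2)])
qed

lemma gp_ND:
  assumes gp: "general_position d x"
  shows "ND d x"
  unfolding ND_def
proof (intro allI impI conjI ballI)
  fix \<sigma> k assume s: "\<sigma> permutes {1..d}"
  have inj: "inj \<sigma>" using permutes_inj[OF s] .
  have sin: "\<sigma> m \<in> {1..d}" if "m \<in> {1..d}" for m using permutes_in_image[OF s] that by simp
  {
    assume k: "k \<in> {1..d}"
    let ?l = "\<lambda>r. \<sigma> (r + 1)"
    have il: "inj_on ?l {0..<k}" using inj by (auto simp: inj_on_def inj_def)
    have sub: "?l ` {0..<k} \<subseteq> {1..d+1}"
    proof (rule image_subsetI)
      fix r assume "r \<in> {0..<k}"
      then have "r + 1 \<in> {1..d}" using k by auto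
      from sin[OF this] show "?l r \<in> {1..d+1}" by auto
    qed
    have card: "card (?l ` {0..<k}) = (k - 1) + 1" using card_image[OF il] k by simp
    have "aff_indep_fam (k - 1) (?l ` {0..<k}) x"
      using gp k sub card unfolding general_position_def by auto
    then have "det (mat k k (\<lambda>(r,c). if c = 0 then 1 else x (?l r) c)) \<noteq> 0"
      using k by (intro aff_det[OF il]) auto
    then show "det (Y_mat x \<sigma> k) \<noteq> 0" by (simp add: Y_mat_def)
  }
  {
    assume k: "k \<in> {1..<d}"
    define l where "l r = (if r < k then \<sigma> (r + 1) else d + 1)" for r
    have il: "inj_on l {0..<k+1}"
    proof (rule inj_onI)
      fix a b assume a: "a \<in> {0..<k+1}" and b: "b \<in> {0..<k+1}" and e: "l a = l b"
      have "\<sigma> (r + 1) \<noteq> d + 1" if "r < k" for r using sin[of "r+1"] that k by auto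
      then show "a = b" using a b e inj k by (auto simp: l_def inj_def split: if_splits)
    qed
    have sub: "l ` {0..<k+1} \<subseteq> {1..d+1}"
    proof (rule image_subsetI)
      fix r assume r: "r \<in> {0..<k+1}"
      show "l r \<in> {1..d+1}"
      proof (cases "r < k")
        case True
        then have "r + 1 \<in> {1..d}" using k by auto
        from sin[OF this] show ?thesis using True by (auto simp: l_def)
      qed (auto simp: l_def)
    qed
    have card: "card (l ` {0..<k+1}) = k + 1" using card_image[OF il] by simp
    have "aff_indep_fam k (l ` {0..<k+1}) x"
      using gp k sub card unfolding general_position_def by auto
    then have "det (mat (k+1) (k+1) (\<lambda>(r,c). if c = 0 then 1 else x (l r) c)) \<noteq> 0"
      by (intro aff_det[OF il]) auto
    moreover have "X_mat d x \<sigma> k = mat (k+1) (k+1) (\<lambda>(r,c). if c = 0 then 1 else x (l r) c)"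
      by (rule eq_matI) (auto simp: X_mat_def l_def)
    ultimately show "det (X_mat d x \<sigma> k) \<noteq> 0" by simp
  }
qed

theorem mainTheorem14:
  fixes d :: nat and x :: "nat \<Rightarrow> nat \<Rightarrow> real"
  assumes "d \<ge> 1"
    and "aff_indep_fam d {1..d+1} x"
    and "general_position d x"
  shows "(\<Sum>\<sigma> | \<sigma> permutes {1..d}. real_of_int (sign \<sigma>) * g_fun d (z_val d x \<sigma>))
           = det (X_mat d x id d) / fact d"
proof -
  have "LHS d x 1 = 1 ^ d * det (X_mat d x id d) / fact d"
    by (rule main_lemma[OF assms(1) gp_ND[OF assms(3)]]) simp
  moreover have "LHS d x 1 = (\<Sum>\<sigma> | \<sigma> permutes {1..d}. real_of_int (sign \<sigma>) * g_fun d (z_val d x \<sigma>))"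
    unfolding LHS_def by simp
  ultimately show ?thesis by simp
qed

end
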